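(* Fix $n\ge1$ and let $M$ be the unique solution of the model problem described in the context. Then $$\overline{M(\overline p)}=i^{\sigma_3}M(p)\,i^{-\sigma_3},\qquad \sigma_3=\begin{bmatrix}1&0\\0&-1\end{bmatrix},\ i^{\sigma_3}=\begin{bmatrix}i&0\\0&-i\end{bmatrix}.$$ In particular $\overline{M_{11}(\overline p)}=M_{11}(p)$, and for $p$ on the line $\{\mathrm{Im}\,p=\tfrac12\mathrm{Im}\,\tau\}$ one has $M_{12}(p_+)=M_{11}(p_-)=\overline{M_{11}(p_+)}$.
   Context: Let $\tau\in i\mathbb{R}_{>0}$, $\Lambda_\tau=\mathbb{Z}+\tau\mathbb{Z}$, and fix $\mathscr D\in(0,1)$. For $p$ on a line $\{\mathrm{Im}\,p=(k+\tfrac12)\mathrm{Im}\,\tau\}$, $p_\pm$ denote boundary values from above/below. Model problem (for given $n$): a $2\times2$ matrix-valued function $M$ on $\mathbb{C}\setminus\bigcup_{k\in\mathbb Z}\{\mathrm{Im}\,p=(k+\tfrac12)\mathrm{Im}\,\tau\}$, meromorphic there, such that: (1) $M(p+1)=(-1)^{n-1}M(p)$, $M(p+\tau)=M(p)$; (2) near $p\equiv0\bmod\Lambda_\tau$, $M(p)=\begin{bmatrix}p^{-1}+\mathcal O(1)&\mathcal O(1)\\\mathcal O(1)&p^{-1}+\mathcal O(1)\end{bmatrix}$; (3) near $p\equiv\mathscr D\bmod\Lambda_\tau$ the first column is $\mathcal O((p-\mathscr D)^{-1})$ and the second is $\mathcal O(p-\mathscr D)$; (4) no other poles; (5) continuous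 boundary values on the lines with $M(p_+)=M(p_-)\begin{bmatrix}0&1\\-1&0\end{bmatrix}$. This problem has a unique solution. *)

theory Defs
  imports "HOL-Analysis.Analysis"
begin

type_synonym cmat = "complex^2^2"

definition cut_lines :: "complex \<Rightarrow> complex set" where
  "cut_lines tau = {p. \<exists>k::int. Im p = (of_int k + 1/2) * Im tau}"

definition mp_domain :: "complex \<Rightarrow> complex set" where
  "mp_domain tau = - cut_lines tau"

definition lattice :: "complex \<Rightarrow> complex set" where
  "lattice tau = {of_int m + of_int k * tau | m k. True}"

definition pole_set :: "complex \<Rightarrow> real \<Rightarrow> complex set" where
  "pole_set tau D = lattice tau \<union> (\<lambda>z. of_real D + z) ` lattice tau"

definition bv_plus :: "(complex \<Rightarrow> cmat) \<Rightarrow> complex \<Rightarrow> cmat" where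
  "bv_plus M p = Lim (at p within {q. Im q > Im p}) M"

definition bv_minus :: "(complex \<Rightarrow> cmat) \<Rightarrow> complex \<Rightarrow> cmat" where
  "bv_minus M p = Lim (at p within {q. Im q < Im p}) M"

definition jump_J :: cmat where
  "jump_J = vector [vector [0, 1], vector [-1, 0]]"

definition i_sigma3 :: cmat where
  "i_sigma3 = vector [vector [\<i>, 0], vector [0, -\<i>]]"

definition i_minus_sigma3 :: cmat where
  "i_minus_sigma3 = vector [vector [-\<i>, 0], vector [0, \<i>]]"

definition model_solution :: "nat \<Rightarrow> complex \<Rightarrow> real \<Rightarrow> (complex \<Rightarrow> cmat) \<Rightarrow> bool" where
  "model_solution n tau D M \<longleftrightarrow>
     \<comment> \<open>meromorphic, with no poles other than those congruent to 0 or D (4)\<close>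
     (\<forall>i j. (\<lambda>p. M p $ i $ j) holomorphic_on (mp_domain tau - pole_set tau D)) \<and>
     \<comment> \<open>(1) quasi-periodicity\<close>
     (\<forall>p \<in> mp_domain tau. M (p + 1) = ((-1::real) ^ (n - 1)) *\<^sub>R M p \<and> M (p + tau) = M p) \<and>
     \<comment> \<open>(2) behaviour at 0\<close>
     (\<exists>C. \<forall>\<^sub>F p in at 0. norm ((\<chi> i j. M p $ i $ j - (if i = j then 1 / p else 0)) :: cmat) \<le> C) \<and>
     \<comment> \<open>(3) behaviour at D: first column O((p-D)^-1), second column O(p-D)\<close>
     (\<exists>C. \<forall>\<^sub>F p in at (of_real D). \<forall>i.
         norm ((p - of_real D) * M p $ i $ 1) \<le> C \<and> norm (M p $ i $ 2) \<le> C * norm (p - of_real D)) \<and>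
     \<comment> \<open>(5) continuous boundary values with jump M(p_+) = M(p_-) J\<close>
     (\<forall>p \<in> cut_lines tau.
         (M \<longlongrightarrow> bv_plus M p) (at p within {q. Im q > Im p}) \<and>
         (M \<longlongrightarrow> bv_minus M p) (at p within {q. Im q < Im p}) \<and>
         bv_plus M p = bv_minus M p ** jump_J) \<and>
     (\<forall>k::int. continuous_on {p. Im p = (of_int k + 1/2) * Im tau} (bv_plus M) \<and>
               continuous_on {p. Im p = (of_int k + 1/2) * Im tau} (bv_minus M))"

end

theory Submission
  imports Defs "HOL-Complex_Analysis.Conformal_Mappings"
begin


definition kk :: "complex \<Rightarrow> complex \<Rightarrow> int" where
  "kk tau p = \<lfloor>Im p / Im tau + 1/2\<rfloor>"

lemma cut_lines_iff: "p \<in> cut_lines tau \<longleftrightarrow> (\<exists>k::int. Im p = (of_int k + 1/2) * Im tau)"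
  by (simp add: cut_lines_def)

lemma kk_strip:
  assumes t: "Im tau > 0" and p: "p \<notin> cut_lines tau"
  shows "(of_int (kk tau p) - 1/2) * Im tau < Im p \<and> Im p < (of_int (kk tau p) + 1/2) * Im tau"
proof -
  let ?x = "Im p / Im tau + 1/2"
  have a: "of_int (kk tau p) \<le> ?x" "?x < of_int (kk tau p) + 1"
    unfolding kk_def by linarith+
  have b: "(of_int (kk tau p) - 1/2) * Im tau \<le> Im p" using a(1) t by (simp add: field_simps)
  have c: "Im p < (of_int (kk tau p) + 1/2) * Im tau" using a(2) t by (simp add: field_simps)
  have "Im p \<noteq> (of_int (kk tau p - 1) + 1/2) * Im tau"
    using p unfolding cut_lines_iff by blast
  hence "(of_int (kk tau p) - 1/2) * Im tau \<noteq> Im p" by (simp add: algebra_simps)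
  with b c show ?thesis by linarith
qed

lemma kk_eqI:
  assumes t: "Im tau > 0" and "(of_int k - 1/2) * Im tau \<le> Im p" "Im p < (of_int k + 1/2) * Im tau"
  shows "kk tau p = k"
proof -
  have "of_int k \<le> Im p / Im tau + 1/2" "Im p / Im tau + 1/2 < of_int k + 1"
    using assms by (simp_all add: field_simps)
  thus ?thesis unfolding kk_def by linarith
qed

lemma not_lineI:
  assumes t: "Im tau > 0" and "(of_int k - 1/2) * Im tau < Im p" "Im p < (of_int k + 1/2) * Im tau"
  shows "p \<notin> cut_lines tau"
proof
  assume "p \<in> cut_lines tau"
  then obtain j :: int where j: "Im p = (of_int j + 1/2) * Im tau" by (auto simp: cut_lines_iff)
  have "of_int k - 1/2 < (of_int j + 1/2 :: real)" "of_int j + 1/2 < (of_int k + 1/2 :: real)"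
    using assms j by (simp_all add: mult_less_cancel_right)
  hence "k - 1 < j" "j < k" by linarith+
  thus False by linarith
qed

lemma kk_line:
  assumes t: "Im tau > 0" and "Im p = (of_int k + 1/2) * Im tau"
  shows "kk tau p = k + 1"
  using assms by (intro kk_eqI) (auto simp: algebra_simps)

lemma kk_plus1: "kk tau (p + 1) = kk tau p" by (simp add: kk_def)

lemma kk_plus_tau: assumes "Im tau > 0" shows "kk tau (p + tau) = kk tau p + 1"
proof -
  have "Im (p + tau) / Im tau + 1/2 = (Im p / Im tau + 1/2) + 1" using assms by (simp add: field_simps)
  hence "kk tau (p + tau) = \<lfloor>(Im p / Im tau + 1/2) + 1\<rfloor>" unfolding kk_def by simp
  thus ?thesis unfolding kk_def by linarith
qed

lemma lines_plus1: "p + 1 \<in> cut_lines tau \<longleftrightarrow> p \<in> cut_lines tau"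
  by (simp add: cut_lines_iff)

lemma lines_plus_tau: "p + tau \<in> cut_lines tau \<longleftrightarrow> p \<in> cut_lines tau"
proof -
  have "(\<exists>k::int. Im p + Im tau = (of_int k + 1/2) * Im tau) \<longleftrightarrow> (\<exists>k::int. Im p = (of_int k + 1/2) * Im tau)"
  proof
    assume "\<exists>k::int. Im p + Im tau = (of_int k + 1/2) * Im tau"
    then obtain k::int where "Im p + Im tau = (of_int k + 1/2) * Im tau" by blast
    hence "Im p = (of_int (k - 1) + 1/2) * Im tau" by (simp add: algebra_simps)
    thus "\<exists>k::int. Im p = (of_int k + 1/2) * Im tau" by blast
  next
    assume "\<exists>k::int. Im p = (of_int k + 1/2) * Im tau"
    then obtain k::int where "Im p = (of_int k + 1/2) * Im tau" by blast
    hence "Im p + Im tau = (of_int (k + 1) + 1/2) * Im tau" by (simp add: algebra_simps)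
    thus "\<exists>k::int. Im p + Im tau = (of_int k + 1/2) * Im tau" by blast
  qed
  thus ?thesis by (simp add: cut_lines_iff)
qed

lemma lines_cnj: "cnj p \<in> cut_lines tau \<longleftrightarrow> p \<in> cut_lines tau"
proof -
  have "(\<exists>k::int. - Im p = (of_int k + 1/2) * Im tau) \<longleftrightarrow> (\<exists>k::int. Im p = (of_int k + 1/2) * Im tau)"
  proof
    assume "\<exists>k::int. - Im p = (of_int k + 1/2) * Im tau"
    then obtain k::int where "- Im p = (of_int k + 1/2) * Im tau" by blast
    hence "Im p = (of_int (- k - 1) + 1/2) * Im tau" by (simp add: algebra_simps)
    thus "\<exists>k::int. Im p = (of_int k + 1/2) * Im tau" by blast
  next
    assume "\<exists>k::int. Im p = (of_int k + 1/2) * Im tau"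
    then obtain k::int where "Im p = (of_int k + 1/2) * Im tau" by blast
    hence "- Im p = (of_int (- k - 1) + 1/2) * Im tau" by (simp add: algebra_simps)
    thus "\<exists>k::int. - Im p = (of_int k + 1/2) * Im tau" by blast
  qed
  thus ?thesis by (simp add: cut_lines_iff)
qed

lemma lattice_iff: "e \<in> lattice tau \<longleftrightarrow> (\<exists>m k::int. e = of_int m + of_int k * tau)"
  unfolding lattice_def by blast

lemma pole_set_iff:
  "e \<in> pole_set tau D \<longleftrightarrow>
   (\<exists>m k::int. \<exists>a. (a = 0 \<or> a = D) \<and> e = of_int m + of_int k * tau + of_real a)"
proof
  assume "e \<in> pole_set tau D"
  hence "e \<in> lattice tau \<or> (\<exists>z\<in>lattice tau. e = of_real D + z)" unfolding pole_set_def by blast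
  thus "\<exists>m k::int. \<exists>a. (a = 0 \<or> a = D) \<and> e = of_int m + of_int k * tau + of_real a"
  proof
    assume "e \<in> lattice tau"
    then obtain m k :: int where "e = of_int m + of_int k * tau" by (auto simp: lattice_iff)
    hence "e = of_int m + of_int k * tau + of_real 0" by simp
    thus ?thesis by blast
  next
    assume "\<exists>z\<in>lattice tau. e = of_real D + z"
    then obtain m k :: int where "e = of_real D + (of_int m + of_int k * tau)" by (auto simp: lattice_iff)
    hence "e = of_int m + of_int k * tau + of_real D" by simp
    thus ?thesis by blast
  qed
next
  assume "\<exists>m k::int. \<exists>a. (a = 0 \<or> a = D) \<and> e = of_int m + of_int k * tau + of_real a"
  then obtain m k :: int and a where a: "a = 0 \<or> a = D" "e = of_int m + of_int k * tau + of_real a" by blast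
  show "e \<in> pole_set tau D"
  proof (cases "a = 0")
    case True
    hence "e \<in> lattice tau" using a by (auto simp: lattice_iff)
    thus ?thesis unfolding pole_set_def by blast
  next
    case False
    hence "e = of_real D + (of_int m + of_int k * tau)" "of_int m + of_int k * tau \<in> lattice tau"
      using a by (auto simp: lattice_iff)
    thus ?thesis unfolding pole_set_def by blast
  qed
qed

lemma pole_set_ReIm:
  assumes "Re tau = 0" "e \<in> pole_set tau D"
  obtains m k :: int and a where "a = 0 \<or> a = D" "Re e = of_int m + a" "Im e = of_int k * Im tau"
    "e = of_int m + of_int k * tau + of_real a"
  using assms unfolding pole_set_iff by auto

lemma pole_set_sep:
  assumes "Re tau = 0" "Im tau > 0" "0 < D" "D < 1"
    and "e1 \<in> pole_set tau D" "e2 \<in> pole_set tau D" "e1 \<noteq> e2"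
  shows "min (Im tau) (min D (1 - D)) \<le> dist e1 e2"
proof -
  obtain m1 k1 a1 where 1: "a1 = 0 \<or> a1 = D" "Re e1 = of_int m1 + a1" "Im e1 = of_int k1 * Im tau"
    using pole_set_ReIm assms by metis
  obtain m2 k2 a2 where 2: "a2 = 0 \<or> a2 = D" "Re e2 = of_int m2 + a2" "Im e2 = of_int k2 * Im tau"
    using pole_set_ReIm assms by metis
  have dI: "\<bar>Im e1 - Im e2\<bar> \<le> dist e1 e2" "\<bar>Re e1 - Re e2\<bar> \<le> dist e1 e2"
    by (metis abs_Im_le_cmod dist_norm minus_complex.sel(2))
       (metis abs_Re_le_cmod dist_norm minus_complex.sel(1))
  show ?thesis
  proof (cases "k1 = k2")
    case False
    hence "1 \<le> \<bar>of_int k1 - of_int k2 :: real\<bar>" by linarith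
    hence "1 * Im tau \<le> \<bar>of_int k1 - of_int k2 :: real\<bar> * Im tau"
      using assms(2) by (intro mult_right_mono) auto
    also have "\<dots> = \<bar>(of_int k1 - of_int k2) * Im tau\<bar>" using assms(2) by (simp add: abs_mult)
    also have "\<dots> = \<bar>Im e1 - Im e2\<bar>" using 1 2 by (simp add: left_diff_distrib)
    finally show ?thesis using dI by linarith
  next
    case True
    have "Re e1 \<noteq> Re e2" using True 1 2 assms(7) complex_eqI by metis
    hence ne: "of_int (m1 - m2) + (a1 - a2) \<noteq> 0" using 1 2 by simp
    define N where "N = m1 - m2"
    have "min D (1 - D) \<le> \<bar>of_int N + (a1 - a2)\<bar>"
    proof -
      consider "N \<ge> 1" | "N = 0" | "N \<le> -1" by linarith
      thus ?thesis
      proof cases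
        case 1 hence "(1::real) \<le> of_int N" by linarith
        thus ?thesis using \<open>a1 = 0 \<or> a1 = D\<close> \<open>a2 = 0 \<or> a2 = D\<close> assms(3,4) by auto
      next
        case 2 thus ?thesis using \<open>a1 = 0 \<or> a1 = D\<close> \<open>a2 = 0 \<or> a2 = D\<close> assms(3,4) ne N_def by auto
      next
        case 3 hence "of_int N \<le> (-1::real)" by linarith
        thus ?thesis using \<open>a1 = 0 \<or> a1 = D\<close> \<open>a2 = 0 \<or> a2 = D\<close> assms(3,4) by auto
      qed
    qed
    also have "\<dots> = \<bar>Re e1 - Re e2\<bar>" using 1 2 N_def by (simp add: algebra_simps)
    finally show ?thesis using dI by linarith
  qed
qed


lemma pole_not_line:
  assumes "Re tau = 0" "Im tau > 0" "p \<in> cut_lines tau" "e \<in> pole_set tau D"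
  shows "Im tau / 2 \<le> dist p e"
proof -
  obtain m k :: int and a where "Im e = of_int k * Im tau"
    using pole_set_ReIm assms(1,4) by metis
  moreover obtain j :: int where "Im p = (of_int j + 1/2) * Im tau" using assms(3) by (auto simp: cut_lines_iff)
  ultimately have "Im p - Im e = (of_int (j - k) + 1/2) * Im tau" by (simp add: algebra_simps)
  moreover have "1/2 \<le> \<bar>of_int (j - k) + 1/2 :: real\<bar>"
  proof (cases "j - k \<ge> 0")
    case True thus ?thesis by simp
  next
    case False hence "of_int (j - k) \<le> (-1::real)" by simp
    thus ?thesis by simp
  qed
  ultimately have "1/2 * Im tau \<le> \<bar>Im p - Im e\<bar>" using assms(2) by (simp add: abs_mult)
  moreover have "\<bar>Im p - Im e\<bar> \<le> dist p e"
    by (metis abs_Im_le_cmod dist_norm minus_complex.sel(2))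
  ultimately show ?thesis by simp
qed

lemma pole_set_no_limpt:
  assumes "Re tau = 0" "Im tau > 0" "0 < D" "D < 1"
  shows "\<not> x islimpt pole_set tau D"
proof
  assume x: "x islimpt pole_set tau D"
  define \<delta> where "\<delta> = min (Im tau) (min D (1 - D))"
  have \<delta>: "\<delta> > 0" using assms by (simp add: \<delta>_def)
  obtain y1 where y1: "y1 \<in> pole_set tau D" "y1 \<noteq> x" "dist y1 x < \<delta>/2"
    using x \<delta> unfolding islimpt_approachable by (metis half_gt_zero)
  have "dist y1 x > 0" using y1 by simp
  then obtain y2 where y2: "y2 \<in> pole_set tau D" "y2 \<noteq> x" "dist y2 x < min (\<delta>/2) (dist y1 x)"
    using x \<delta> unfolding islimpt_approachable by (metis half_gt_zero min_less_iff_conj)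
  have "y1 \<noteq> y2" using y2 by auto
  hence "\<delta> \<le> dist y1 y2" using pole_set_sep[OF assms y1(1) y2(1)] \<delta>_def by simp
  moreover have "dist y1 y2 \<le> dist y1 x + dist y2 x" using dist_triangle[of y1 y2 x] by (simp add: dist_commute)
  ultimately show False using y1 y2 by linarith
qed

lemma pole_set_closed:
  assumes "Re tau = 0" "Im tau > 0" "0 < D" "D < 1"
  shows "closed (pole_set tau D)"
  using pole_set_no_limpt[OF assms] by (simp add: closed_limpt)

lemma pole_set_countable: "countable (pole_set tau D)"
proof -
  have "lattice tau \<subseteq> (\<lambda>(m::int, k::int). of_int m + of_int k * tau) ` UNIV"
    apply (clarsimp simp: lattice_iff)
    subgoal for m k by (rule image_eqI[of _ _ "(m,k)"]) auto
    done
  hence "countable (lattice tau)" by (rule countable_subset) simp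
  thus ?thesis unfolding pole_set_def by simp
qed

lemma pole_set_plus1: "p + 1 \<in> pole_set tau D \<longleftrightarrow> p \<in> pole_set tau D"
proof
  assume "p + 1 \<in> pole_set tau D"
  then obtain m k :: int and a where "a = 0 \<or> a = D" "p + 1 = of_int m + of_int k * tau + of_real a"
    unfolding pole_set_iff by blast
  hence "a = 0 \<or> a = D" "p = of_int (m - 1) + of_int k * tau + of_real a" by (auto simp: algebra_simps)
  thus "p \<in> pole_set tau D" unfolding pole_set_iff by blast
next
  assume "p \<in> pole_set tau D"
  then obtain m k :: int and a where "a = 0 \<or> a = D" "p = of_int m + of_int k * tau + of_real a"
    unfolding pole_set_iff by blast
  hence "a = 0 \<or> a = D" "p + 1 = of_int (m + 1) + of_int k * tau + of_real a" by (auto simp: algebra_simps)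
  thus "p + 1 \<in> pole_set tau D" unfolding pole_set_iff by blast
qed

lemma pole_set_plus_tau: "p + tau \<in> pole_set tau D \<longleftrightarrow> p \<in> pole_set tau D"
proof
  assume "p + tau \<in> pole_set tau D"
  then obtain m k :: int and a where "a = 0 \<or> a = D" "p + tau = of_int m + of_int k * tau + of_real a"
    unfolding pole_set_iff by blast
  hence "a = 0 \<or> a = D" "p = of_int m + of_int (k - 1) * tau + of_real a" by (auto simp: algebra_simps)
  thus "p \<in> pole_set tau D" unfolding pole_set_iff by blast
next
  assume "p \<in> pole_set tau D"
  then obtain m k :: int and a where "a = 0 \<or> a = D" "p = of_int m + of_int k * tau + of_real a"
    unfolding pole_set_iff by blast
  hence "a = 0 \<or> a = D" "p + tau = of_int m + of_int (k + 1) * tau + of_real a" by (auto simp: algebra_simps)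
  thus "p + tau \<in> pole_set tau D" unfolding pole_set_iff by blast
qed

lemma cnj_tau: "Re tau = 0 \<Longrightarrow> cnj tau = - tau"
  by (simp add: complex_eq_iff)

lemma pole_set_cnj1:
  assumes "Re tau = 0" "p \<in> pole_set tau D" shows "cnj p \<in> pole_set tau D"
proof -
  obtain m k :: int and a where "a = 0 \<or> a = D" "p = of_int m + of_int k * tau + of_real a"
    using assms unfolding pole_set_iff by blast
  hence "a = 0 \<or> a = D" "cnj p = of_int m + of_int (- k) * tau + of_real a"
    using cnj_tau[OF assms(1)] by auto
  thus ?thesis unfolding pole_set_iff by blast
qed

lemma pole_set_cnj: "Re tau = 0 \<Longrightarrow> cnj p \<in> pole_set tau D \<longleftrightarrow> p \<in> pole_set tau D"
  using pole_set_cnj1[of tau p D] pole_set_cnj1[of tau "cnj p" D] by auto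

definition WW :: "complex \<Rightarrow> real \<Rightarrow> complex set" where
  "WW tau D = mp_domain tau - pole_set tau D"

lemma WW_plus1: "p + 1 \<in> WW tau D \<longleftrightarrow> p \<in> WW tau D"
  by (simp add: WW_def mp_domain_def lines_plus1 pole_set_plus1)

lemma WW_plus_tau: "p + tau \<in> WW tau D \<longleftrightarrow> p \<in> WW tau D"
  by (simp add: WW_def mp_domain_def lines_plus_tau pole_set_plus_tau)

lemma WW_cnj: "Re tau = 0 \<Longrightarrow> cnj p \<in> WW tau D \<longleftrightarrow> p \<in> WW tau D"
  by (simp add: WW_def mp_domain_def lines_cnj pole_set_cnj)

lemma strip_ball:
  assumes t: "Im tau > 0" and z: "z \<notin> cut_lines tau"
  obtains r where "r > 0" "\<And>q. q \<in> ball z r \<Longrightarrow> q \<notin> cut_lines tau \<and> kk tau q = kk tau z"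
proof -
  define k where "k = kk tau z"
  have s: "(of_int k - 1/2) * Im tau < Im z" "Im z < (of_int k + 1/2) * Im tau"
    using kk_strip[OF t z] k_def by auto
  define r where "r = min (Im z - (of_int k - 1/2) * Im tau) ((of_int k + 1/2) * Im tau - Im z)"
  have "r > 0" using s by (simp add: r_def)
  moreover have "q \<notin> cut_lines tau \<and> kk tau q = kk tau z" if "q \<in> ball z r" for q
  proof -
    have "\<bar>Im q - Im z\<bar> \<le> dist z q"
      by (metis abs_Im_le_cmod abs_minus_commute dist_norm minus_complex.sel(2))
    hence "\<bar>Im q - Im z\<bar> < r" using that by simp
    hence "(of_int k - 1/2) * Im tau < Im q" "Im q < (of_int k + 1/2) * Im tau"
      unfolding r_def by linarith+
    thus ?thesis using not_lineI[OF t] kk_eqI[OF t] k_def by (meson less_imp_le)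
  qed
  ultimately show ?thesis using that by blast
qed

lemma open_mp_domain: assumes "Im tau > 0" shows "open (mp_domain tau)"
  unfolding open_contains_ball mp_domain_def
proof
  fix z assume "z \<in> - cut_lines tau"
  then obtain r where "r > 0" "\<And>q. q \<in> ball z r \<Longrightarrow> q \<notin> cut_lines tau \<and> kk tau q = kk tau z"
    using strip_ball[OF assms] by blast
  thus "\<exists>e>0. ball z e \<subseteq> - cut_lines tau" by blast
qed

lemma open_WW:
  assumes "Re tau = 0" "Im tau > 0" "0 < D" "D < 1" shows "open (WW tau D)"
  unfolding WW_def using open_mp_domain[OF assms(2)] pole_set_closed[OF assms]
  by (intro open_Diff) auto

lemma eventually_WW:
  assumes "Re tau = 0" "Im tau > 0" "0 < D" "D < 1" "e \<in> pole_set tau D"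
  shows "eventually (\<lambda>q. q \<in> WW tau D \<and> kk tau q = kk tau e) (at e)"
proof -
  define \<delta> where "\<delta> = min (Im tau) (min D (1 - D))"
  have \<delta>: "\<delta> > 0" using assms by (simp add: \<delta>_def)
  have enl: "e \<notin> cut_lines tau" using pole_not_line[OF assms(1,2) _ assms(5)] assms(2) by fastforce
  obtain r where r: "r > 0" "\<And>q. q \<in> ball e r \<Longrightarrow> q \<notin> cut_lines tau \<and> kk tau q = kk tau e"
    using strip_ball[OF assms(2) enl] by blast
  have body: "\<forall>q. q \<noteq> e \<and> dist q e < min r \<delta> \<longrightarrow> q \<in> WW tau D \<and> kk tau q = kk tau e"
  proof (intro allI impI)
    fix q assume q: "q \<noteq> e \<and> dist q e < min r \<delta>"
    hence "q \<in> ball e r" by (simp add: dist_commute)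
    moreover have "q \<notin> pole_set tau D"
    proof
      assume "q \<in> pole_set tau D"
      hence "\<delta> \<le> dist q e" using pole_set_sep[OF assms(1-4) _ assms(5)] q \<delta>_def by blast
      thus False using q by simp
    qed
    ultimately show "q \<in> WW tau D \<and> kk tau q = kk tau e" using r(2) by (auto simp: WW_def mp_domain_def)
  qed
  have "min r \<delta> > 0" using r \<delta> by simp
  with body show ?thesis unfolding eventually_at by blast
qed

lemma zero_in_pole_set: "0 \<in> pole_set tau D"
  unfolding pole_set_iff by (rule exI[of _ 0], rule exI[of _ 0], rule exI[of _ 0]) simp

lemma D_in_pole_set: "of_real D \<in> pole_set tau D"
  unfolding pole_set_iff by (rule exI[of _ 0], rule exI[of _ 0], rule exI[of _ D]) simp

lemma kk_real: "Im tau > 0 \<Longrightarrow> kk tau (of_real x) = 0"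
  by (simp add: kk_def)

lemma kk_0: "Im tau > 0 \<Longrightarrow> kk tau 0 = 0"
  by (simp add: kk_def)

lemma int_iter_set:
  assumes "\<And>p. p + a \<in> S \<longleftrightarrow> p \<in> S"
  shows "p + of_int k * a \<in> S \<longleftrightarrow> p \<in> S"
proof (induction k arbitrary: p rule: int_induct[where k = 0])
  case base then show ?case by simp
next
  case (step1 i) then show ?case using assms[of "p + of_int i * a"] by (simp add: algebra_simps)
next
  case (step2 i) then show ?case using assms[of "p + of_int (i - 1) * a"] by (simp add: algebra_simps)
qed

lemma int_iter_norm:
  fixes F :: "complex \<Rightarrow> complex"
  assumes "\<And>p. p + a \<in> S \<longleftrightarrow> p \<in> S" "\<And>p. p \<in> S \<Longrightarrow> norm (F (p + a)) = norm (F p)"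
  shows "p \<in> S \<Longrightarrow> norm (F (p + of_int k * a)) = norm (F p)"
proof (induction k arbitrary: p rule: int_induct[where k = 0])
  case base then show ?case by simp
next
  case (step1 i)
  have "p + of_int i * a \<in> S" using int_iter_set[of a S] assms(1) step1 by blast
  then show ?case using step1 assms(2)[of "p + of_int i * a"] by (simp add: algebra_simps)
next
  case (step2 i)
  have "p + of_int (i - 1) * a \<in> S" using int_iter_set[of a S] assms(1) step2 by blast
  then show ?case using step2 assms(2)[of "p + of_int (i - 1) * a"] by (simp add: algebra_simps)
qed


definition glue :: "complex \<Rightarrow> (int \<Rightarrow> complex) \<Rightarrow> (complex \<Rightarrow> complex) \<Rightarrow> (complex \<Rightarrow> complex) \<Rightarrow> complex \<Rightarrow> complex" where
  "glue tau c u P p = c (kk tau p) * (if p \<in> cut_lines tau then P p else u p)"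

lemma glue_off: "p \<notin> cut_lines tau \<Longrightarrow> glue tau c u P p = c (kk tau p) * u p"
  by (simp add: glue_def)

lemma line_ball:
  assumes "Re tau = 0" "Im tau > 0" "Im z = (of_int k + 1/2) * Im tau" "q \<in> ball z (Im tau / 2)"
  shows "q \<notin> pole_set tau D"
    "Im q < Im z \<Longrightarrow> q \<notin> cut_lines tau \<and> kk tau q = k"
    "Im z < Im q \<Longrightarrow> q \<notin> cut_lines tau \<and> kk tau q = k + 1"
proof -
  have zl: "z \<in> cut_lines tau" using assms(3) by (auto simp: cut_lines_iff)
  show "q \<notin> pole_set tau D" using pole_not_line[OF assms(1,2) zl, of q D] assms(4) by (auto simp: dist_commute)
  have "\<bar>Im q - Im z\<bar> \<le> dist z q"
    by (metis abs_Im_le_cmod abs_minus_commute dist_norm minus_complex.sel(2))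
  hence d: "\<bar>Im q - Im z\<bar> < Im tau / 2" using assms(4) by simp
  show "Im q < Im z \<Longrightarrow> q \<notin> cut_lines tau \<and> kk tau q = k"
  proof -
    assume "Im q < Im z"
    hence "(of_int k - 1/2) * Im tau < Im q" "Im q < (of_int k + 1/2) * Im tau"
      using d assms(3) by (auto simp: algebra_simps)
    thus ?thesis using not_lineI[OF assms(2)] kk_eqI[OF assms(2)] by (meson less_imp_le)
  qed
  show "Im z < Im q \<Longrightarrow> q \<notin> cut_lines tau \<and> kk tau q = k + 1"
  proof -
    assume "Im z < Im q"
    hence "(of_int (k + 1) - 1/2) * Im tau < Im q" "Im q < (of_int (k + 1) + 1/2) * Im tau"
      using d assms(3) by (auto simp: algebra_simps)
    thus ?thesis using not_lineI[OF assms(2)] kk_eqI[OF assms(2)] by (meson less_imp_le)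
  qed
qed

lemma glue_holomorphic:
  assumes tau: "Re tau = 0" "Im tau > 0" and D: "0 < D" "D < 1"
    and hol: "u holomorphic_on WW tau D"
    and above: "\<And>p. p \<in> cut_lines tau \<Longrightarrow> (u \<longlongrightarrow> P p) (at p within {q. Im q > Im p})"
    and below: "\<And>p. p \<in> cut_lines tau \<Longrightarrow> (u \<longlongrightarrow> Q p) (at p within {q. Im q < Im p})"
    and jump: "\<And>p. p \<in> cut_lines tau \<Longrightarrow> c (kk tau p) * P p = c (kk tau p - 1) * Q p"
    and cont: "\<And>k::int. continuous_on {p. Im p = (of_int k + 1/2) * Im tau} P"
  shows "glue tau c u P holomorphic_on (UNIV - pole_set tau D)"
proof -
  let ?g = "glue tau c u P"
  have "?g analytic_on (UNIV - pole_set tau D)"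
    unfolding analytic_on_def
  proof
    fix z assume z: "z \<in> UNIV - pole_set tau D"
    show "\<exists>e>0. ?g holomorphic_on ball z e"
    proof (cases "z \<in> cut_lines tau")
      case False
      obtain r1 where r1: "r1 > 0" "\<And>q. q \<in> ball z r1 \<Longrightarrow> q \<notin> cut_lines tau \<and> kk tau q = kk tau z"
        using strip_ball[OF tau(2) False] by blast
      have "open (- pole_set tau D)" using pole_set_closed[OF tau D] by auto
      then obtain r2 where r2: "r2 > 0" "ball z r2 \<subseteq> - pole_set tau D"
        using z open_contains_ball by blast
      define r where "r = min r1 r2"
      have sub: "ball z r \<subseteq> WW tau D" using r1 r2 by (auto simp: r_def WW_def mp_domain_def)
      have "(\<lambda>q. c (kk tau z) * u q) holomorphic_on ball z r"
        by (rule holomorphic_on_mult[OF holomorphic_on_const holomorphic_on_subset[OF hol sub]])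
      moreover have "\<forall>q\<in>ball z r. c (kk tau z) * u q = ?g q"
      proof
        fix q assume "q \<in> ball z r"
        hence "q \<in> ball z r1" by (simp add: r_def)
        thus "c (kk tau z) * u q = ?g q" using r1(2)[of q] by (simp add: glue_def)
      qed
      ultimately have "?g holomorphic_on ball z r" using holomorphic_transform by blast
      moreover have "r > 0" using r1 r2 by (simp add: r_def)
      ultimately show ?thesis by blast
    next
      case True
      then obtain k :: int where k: "Im z = (of_int k + 1/2) * Im tau" by (auto simp: cut_lines_iff)
      define S where "S = ball z (Im tau / 2)"
      note lb = line_ball[OF tau k, folded S_def]
      have Sd: "S \<subseteq> UNIV - pole_set tau D" using lb(1) by auto
      have hlow: "?g holomorphic_on (S \<inter> {q. Im q < Im z})"
      proof -
        have sub: "S \<inter> {q. Im q < Im z} \<subseteq> WW tau D"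
          using lb(1,2) by (auto simp: WW_def mp_domain_def)
        have "(\<lambda>q. c k * u q) holomorphic_on (S \<inter> {q. Im q < Im z})"
          by (rule holomorphic_on_mult[OF holomorphic_on_const holomorphic_on_subset[OF hol sub]])
        moreover have "\<forall>q\<in>S \<inter> {q. Im q < Im z}. c k * u q = ?g q"
          using lb(2) by (auto simp: glue_def)
        ultimately show ?thesis using holomorphic_transform by blast
      qed
      have hup: "?g holomorphic_on (S \<inter> {q. Im z < Im q})"
      proof -
        have sub: "S \<inter> {q. Im z < Im q} \<subseteq> WW tau D"
          using lb(1,3) by (auto simp: WW_def mp_domain_def)
        have "(\<lambda>q. c (k + 1) * u q) holomorphic_on (S \<inter> {q. Im z < Im q})"
          by (rule holomorphic_on_mult[OF holomorphic_on_const holomorphic_on_subset[OF hol sub]])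
        moreover have "\<forall>q\<in>S \<inter> {q. Im z < Im q}. c (k + 1) * u q = ?g q"
          using lb(3) by (auto simp: glue_def)
        ultimately show ?thesis using holomorphic_transform by blast
      qed
      have oS: "open S" by (simp add: S_def)
      have olow: "open (S \<inter> {q. Im q < Im z})" "open (S \<inter> {q. Im z < Im q})"
        using oS by (auto intro!: open_Int open_halfspace_Im_lt open_halfspace_Im_gt)
      have cont_S: "continuous_on S ?g"
      proof (rule continuous_at_imp_continuous_on, rule ballI)
        fix y assume y: "y \<in> S"
        consider "Im y < Im z" | "Im z < Im y" | "Im y = Im z" by linarith
        thus "isCont ?g y"
        proof cases
          case 1
          have "continuous_on (S \<inter> {q. Im q < Im z}) ?g"
            using hlow holomorphic_on_imp_continuous_on by blast
          thus ?thesis using olow(1) y 1 continuous_on_eq_continuous_at by blast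
        next
          case 2
          have "continuous_on (S \<inter> {q. Im z < Im q}) ?g"
            using hup holomorphic_on_imp_continuous_on by blast
          thus ?thesis using olow(2) y 2 continuous_on_eq_continuous_at by blast
        next
          case 3
          have yl: "y \<in> cut_lines tau" using 3 k by (auto simp: cut_lines_iff)
          have gy: "?g y = c (k + 1) * P y"
            using yl kk_line[OF tau(2), of y k] 3 k by (simp add: glue_def)
          have yk: "Im y = (of_int k + 1/2) * Im tau" using 3 k by simp
          have upq: "c (k + 1) * u q = ?g q" if "dist q y < Im tau / 2" "Im q > Im y" for q
          proof -
            have "q \<in> ball y (Im tau / 2)" using that by (simp add: dist_commute)
            hence "q \<notin> cut_lines tau \<and> kk tau q = k + 1" using line_ball(3)[OF tau yk] that by blast
            thus ?thesis by (simp add: glue_def)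
          qed
          have lowq: "c k * u q = ?g q" if "dist q y < Im tau / 2" "Im q < Im y" for q
          proof -
            have "q \<in> ball y (Im tau / 2)" using that by (simp add: dist_commute)
            hence "q \<notin> cut_lines tau \<and> kk tau q = k" using line_ball(2)[OF tau yk] that by blast
            thus ?thesis by (simp add: glue_def)
          qed
          have h2: "Im tau / 2 > 0" using tau(2) by simp
          have ev_up: "eventually (\<lambda>q. c (k + 1) * u q = ?g q) (at y within {q. Im q > Im y})"
            unfolding eventually_at using upq h2 by blast
          have ev_low: "eventually (\<lambda>q. c k * u q = ?g q) (at y within {q. Im q < Im y})"
            unfolding eventually_at using lowq h2 by blast
          have l_up: "(?g \<longlongrightarrow> ?g y) (at y within {q. Im q > Im y})"
          proof -
            have "((\<lambda>q. c (k + 1) * u q) \<longlongrightarrow> c (k + 1) * P y) (at y within {q. Im q > Im y})"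
              by (intro tendsto_intros above yl)
            thus ?thesis using ev_up gy by (simp add: tendsto_cong)
          qed
          have l_low: "(?g \<longlongrightarrow> ?g y) (at y within {q. Im q < Im y})"
          proof -
            have "((\<lambda>q. c k * u q) \<longlongrightarrow> c k * Q y) (at y within {q. Im q < Im y})"
              by (intro tendsto_intros below yl)
            moreover have "c k * Q y = ?g y"
              using jump[OF yl] kk_line[OF tau(2), of y k] 3 k gy by simp
            ultimately show ?thesis using ev_low by (simp add: tendsto_cong)
          qed
          have l_line: "(?g \<longlongrightarrow> ?g y) (at y within {q. Im q = Im y})"
          proof -
            have "(P \<longlongrightarrow> P y) (at y within {q. Im q = Im y})"
              using cont[of k] 3 k unfolding continuous_on_def by auto
            hence "((\<lambda>q. c (k + 1) * P q) \<longlongrightarrow> c (k + 1) * P y) (at y within {q. Im q = Im y})"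
              by (intro tendsto_intros)
            moreover have "eventually (\<lambda>q. c (k + 1) * P q = ?g q) (at y within {q. Im q = Im y})"
              unfolding eventually_at
              using 3 k tau(2) kk_line[OF tau(2)]
              by (intro exI[of _ 1]) (auto simp: glue_def cut_lines_iff)
            ultimately show ?thesis using gy by (simp add: tendsto_cong)
          qed
          have "(?g \<longlongrightarrow> ?g y) (at y within ({q. Im q > Im y} \<union> {q. Im q < Im y} \<union> {q. Im q = Im y}))"
            using l_up l_low l_line by (simp add: Lim_within_Un)
          moreover have "{q. Im q > Im y} \<union> {q. Im q < Im y} \<union> {q. Im q = Im y} = UNIV" by auto
          ultimately show ?thesis by (simp add: isCont_def)
        qed
      qed
      have "?g holomorphic_on S"
        by (rule holomorphic_on_paste_across_line[where d = \<i> and k = "Im z"])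
           (use oS hlow hup cont_S in \<open>simp_all add: inner_complex_def\<close>)
      thus ?thesis using S_def tau(2) by (intro exI[of _ "Im tau / 2"]) auto
    qed
  qed
  thus ?thesis by (rule analytic_imp_holomorphic)
qed


lemma remove_sing:
  fixes \<Phi> :: "complex \<Rightarrow> complex"
  assumes hol: "\<Phi> holomorphic_on (UNIV - E)" and cl: "closed E"
    and nl: "\<And>x. \<not> x islimpt E"
    and bd: "\<And>e. e \<in> E \<Longrightarrow> \<exists>B. eventually (\<lambda>q. norm (\<Phi> q) \<le> B) (at e)"
  shows "\<exists>\<Psi>. \<Psi> holomorphic_on UNIV \<and> (\<forall>z. z \<notin> E \<longrightarrow> \<Psi> z = \<Phi> z)"
proof -
  define \<Psi> where "\<Psi> z = (if z \<in> E then Lim (at z) \<Phi> else \<Phi> z)" for z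
  have "\<Psi> analytic_on UNIV" unfolding analytic_on_def
  proof
    fix z :: complex
    show "\<exists>e>0. \<Psi> holomorphic_on ball z e"
    proof (cases "z \<in> E")
      case False
      have "open (- E)" using cl by auto
      then obtain r where r: "r > 0" "ball z r \<subseteq> - E" using False open_contains_ball by blast
      have "\<Phi> holomorphic_on ball z r" using holomorphic_on_subset[OF hol] r by auto
      moreover have "\<And>q. q \<in> ball z r \<Longrightarrow> \<Phi> q = \<Psi> q" using r by (auto simp: \<Psi>_def)
      ultimately show ?thesis using r holomorphic_transform by blast
    next
      case True
      obtain r where r: "r > 0" "\<And>y. y \<in> E \<Longrightarrow> y \<noteq> z \<Longrightarrow> r \<le> dist y z"
        using nl[of z] unfolding islimpt_approachable by (meson not_le)
      have h: "\<Phi> holomorphic_on (ball z r - {z})"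
      proof (rule holomorphic_on_subset[OF hol], rule subsetI)
        fix x assume x: "x \<in> ball z r - {z}"
        have "x \<notin> E"
        proof
          assume "x \<in> E"
          hence "r \<le> dist x z" using r(2) x by blast
          thus False using x by (simp add: dist_commute)
        qed
        thus "x \<in> UNIV - E" by simp
      qed
      have zi: "z \<in> interior (ball z r)" using r by simp
      obtain B where B: "eventually (\<lambda>q. norm (\<Phi> q) \<le> B) (at z)" using bd True by blast
      obtain g where g: "g holomorphic_on ball z r" "\<And>w. w \<in> ball z r - {z} \<Longrightarrow> g w = \<Phi> w"
        using holomorphic_on_extend_bounded[OF h zi] B by blast
      have "isCont g z" using g(1) r
        by (meson centre_in_ball holomorphic_on_imp_continuous_on continuous_on_eq_continuous_at open_ball)
      hence "(g \<longlongrightarrow> g z) (at z)" by (simp add: isCont_def)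
      moreover have "eventually (\<lambda>w. g w = \<Phi> w) (at z)"
        unfolding eventually_at using r g(2) by (intro exI[of _ r]) (auto simp: dist_commute)
      ultimately have "(\<Phi> \<longlongrightarrow> g z) (at z)" by (simp add: tendsto_cong)
      hence "Lim (at z) \<Phi> = g z" by (simp add: tendsto_Lim)
      have "\<And>w. w \<in> ball z r \<Longrightarrow> g w = \<Psi> w"
      proof -
        fix w assume w: "w \<in> ball z r"
        show "g w = \<Psi> w"
        proof (cases "w = z")
          case True thus ?thesis using \<open>Lim (at z) \<Phi> = g z\<close> \<open>z \<in> E\<close> by (simp add: \<Psi>_def)
        next
          case False
          have "w \<notin> E"
          proof
            assume "w \<in> E" hence "r \<le> dist w z" using r(2) False by blast
            thus False using w by (simp add: dist_commute)
          qed
          thus ?thesis using g(2) w False by (simp add: \<Psi>_def)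
        qed
      qed
      thus ?thesis using g(1) r holomorphic_transform by blast
    qed
  qed
  hence "\<Psi> holomorphic_on UNIV" by (rule analytic_imp_holomorphic)
  thus ?thesis by (intro exI[of _ \<Psi>]) (auto simp: \<Psi>_def)
qed

lemma periodic_zero:
  fixes \<Psi> :: "complex \<Rightarrow> complex"
  assumes tau: "Re tau = 0" "Im tau > 0" and hol: "\<Psi> holomorphic_on UNIV"
    and p1: "\<And>p. \<Psi> (p + 1) = \<Psi> p" and pt: "\<And>p. \<Psi> (p + tau) = - \<Psi> p"
  shows "\<Psi> p = 0"
proof -
  have "compact (\<Psi> ` cball 0 (1 + Im tau))"
    using hol by (intro compact_continuous_image holomorphic_on_imp_continuous_on)
       (auto intro: holomorphic_on_subset)
  then obtain B where B: "\<And>z. z \<in> cball 0 (1 + Im tau) \<Longrightarrow> norm (\<Psi> z) \<le> B"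
    by (meson bounded_iff compact_imp_bounded imageI)
  have n1: "norm (\<Psi> (p + of_int k * 1)) = norm (\<Psi> p)" for p k
    by (rule int_iter_norm[of 1 UNIV]) (auto simp: p1)
  have nt: "norm (\<Psi> (p + of_int k * tau)) = norm (\<Psi> p)" for p k
    by (rule int_iter_norm[of tau UNIV]) (auto simp: pt)
  have "norm (\<Psi> p) \<le> B" for p
  proof -
    define m where "m = \<lfloor>Re p\<rfloor>"
    define k where "k = \<lfloor>Im p / Im tau\<rfloor>"
    define p' where "p' = (p + of_int (- m) * 1) + of_int (- k) * tau"
    have "norm (\<Psi> p') = norm (\<Psi> (p + of_int (- m) * 1))" unfolding p'_def by (rule nt)
    also have "\<dots> = norm (\<Psi> p)" by (rule n1)
    finally have "norm (\<Psi> p') = norm (\<Psi> p)" .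
    moreover have "p' \<in> cball 0 (1 + Im tau)"
    proof -
      have re: "Re p' = Re p - of_int m" using tau by (simp add: p'_def)
      have im: "Im p' = Im p - of_int k * Im tau" by (simp add: p'_def)
      have "0 \<le> Re p'" "Re p' < 1" using re m_def by linarith+
      moreover have "of_int k \<le> Im p / Im tau" "Im p / Im tau < of_int k + 1" using k_def by linarith+
      hence "of_int k * Im tau \<le> Im p" "Im p < (of_int k + 1) * Im tau"
        using tau(2) by (simp_all add: field_simps)
      hence "0 \<le> Im p'" "Im p' < Im tau" using im by (simp_all add: algebra_simps)
      ultimately have "norm p' \<le> 1 + Im tau" using cmod_le[of p'] by linarith
      thus ?thesis by simp
    qed
    ultimately show ?thesis using B by metis
  qed
  hence "bounded (range \<Psi>)" unfolding bounded_iff by blast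
  then obtain c where c: "\<And>z. \<Psi> z = c" using Liouville_theorem[OF hol] unfolding constant_on_def by blast
  have "c = - c" using pt[of p] c by simp
  thus ?thesis using c by simp
qed


lemma WW_nonempty:
  assumes tau: "Re tau = 0" "Im tau > 0"
  shows "Complex 0 (Im tau / 4) \<in> WW tau D"
proof -
  let ?z = "Complex 0 (Im tau / 4)"
  have "?z \<notin> cut_lines tau" by (rule not_lineI[OF tau(2), of 0]) (use tau in auto)
  moreover have "?z \<notin> pole_set tau D"
  proof
    assume "?z \<in> pole_set tau D"
    then obtain m k :: int and a where "Im ?z = of_int k * Im tau" using pole_set_ReIm[OF tau(1)] by metis
    hence "of_int k = (1/4 :: real)" using tau(2) by (simp add: field_simps)
    moreover have "k \<le> 0 \<or> k \<ge> 1" by linarith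
    ultimately show False by (auto dest: of_int_le_0_iff[THEN iffD2] simp del: of_int_le_0_iff) (smt (verit) of_int_le_0_iff of_int_less_1_iff)+
  qed
  ultimately show ?thesis by (simp add: WW_def mp_domain_def)
qed

lemma WW_sub: "p \<in> WW tau D \<Longrightarrow> p \<notin> cut_lines tau \<and> p \<notin> pole_set tau D"
  by (simp add: WW_def mp_domain_def)

lemma hom_zero:
  fixes h1 h2 P1 P2 Q1 Q2 :: "complex \<Rightarrow> complex" and s :: complex
  assumes tau: "Re tau = 0" "Im tau > 0" and D: "0 < D" "D < 1" and s: "s * s = 1"
    and hol1: "h1 holomorphic_on WW tau D" and hol2: "h2 holomorphic_on WW tau D"
    and per: "\<And>p. p \<in> WW tau D \<Longrightarrow> h1 (p + 1) = s * h1 p \<and> h2 (p + 1) = s * h2 p \<and>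
                 h1 (p + tau) = h1 p \<and> h2 (p + tau) = h2 p"
    and b0: "\<exists>B. eventually (\<lambda>q. norm (h1 q) \<le> B \<and> norm (h2 q) \<le> B) (at 0)"
    and bD: "\<exists>C. eventually (\<lambda>q. norm ((q - of_real D) * h1 q) \<le> C \<and>
                 norm (h2 q) \<le> C * norm (q - of_real D)) (at (of_real D))"
    and lim: "\<And>p. p \<in> cut_lines tau \<Longrightarrow>
       (h1 \<longlongrightarrow> P1 p) (at p within {q. Im q > Im p}) \<and> (h2 \<longlongrightarrow> P2 p) (at p within {q. Im q > Im p}) \<and>
       (h1 \<longlongrightarrow> Q1 p) (at p within {q. Im q < Im p}) \<and> (h2 \<longlongrightarrow> Q2 p) (at p within {q. Im q < Im p}) \<and>
       P1 p = - Q2 p \<and> P2 p = Q1 p"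
    and cont: "\<And>k::int. continuous_on {p. Im p = (of_int k + 1/2) * Im tau} P1 \<and>
                        continuous_on {p. Im p = (of_int k + 1/2) * Im tau} P2"
    and p: "p \<in> WW tau D"
  shows "h1 p = 0 \<and> h2 p = 0"
proof -
  define E where "E = pole_set tau D"
  define cf :: "int \<Rightarrow> complex" where "cf k = (-\<i>) powi k" for k
  define cg :: "int \<Rightarrow> complex" where "cg k = \<i> powi k" for k
  have cf_m: "cf k = cf (k - 1) * (-\<i>)" for k unfolding cf_def by (rule power_int_minus_mult[symmetric]) simp
  have cg_m: "cg k = cg (k - 1) * \<i>" for k unfolding cg_def by (rule power_int_minus_mult[symmetric]) simp
  have cf_p: "cf (k + 1) = cf k * (-\<i>)" for k unfolding cf_def by (rule power_int_add_1) simp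
  have cg_p: "cg (k + 1) = cg k * \<i>" for k unfolding cg_def by (rule power_int_add_1) simp
  have cf_sq: "cf k * cf k = (-1) powi k" for k
    by (simp add: cf_def power_int_mult_distrib[symmetric])
  have cg_sq: "cg k * cg k = (-1) powi k" for k
    by (simp add: cg_def power_int_mult_distrib[symmetric])
  have cf_nz: "cf k \<noteq> 0" for k by (simp add: cf_def)
  have m1_p: "(-1::complex) powi (k + 1) = - ((-1) powi k)" for k by (simp add: power_int_add_1)
  define F where "F = glue tau cf (\<lambda>p. h1 p + \<i> * h2 p) (\<lambda>p. P1 p + \<i> * P2 p)"
  define G where "G = glue tau cg (\<lambda>p. h1 p - \<i> * h2 p) (\<lambda>p. P1 p - \<i> * P2 p)"
  have hF: "F holomorphic_on (UNIV - E)" unfolding F_def E_def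
  proof (rule glue_holomorphic[OF tau D, where Q = "\<lambda>p. Q1 p + \<i> * Q2 p"])
    show "(\<lambda>p. h1 p + \<i> * h2 p) holomorphic_on WW tau D" using hol1 hol2 by (intro holomorphic_intros)
    fix p assume pl: "p \<in> cut_lines tau"
    show "((\<lambda>p. h1 p + \<i> * h2 p) \<longlongrightarrow> P1 p + \<i> * P2 p) (at p within {q. Im q > Im p})"
      using lim[OF pl] by (intro tendsto_intros) auto
    show "((\<lambda>p. h1 p + \<i> * h2 p) \<longlongrightarrow> Q1 p + \<i> * Q2 p) (at p within {q. Im q < Im p})"
      using lim[OF pl] by (intro tendsto_intros) auto
    show "cf (kk tau p) * (P1 p + \<i> * P2 p) = cf (kk tau p - 1) * (Q1 p + \<i> * Q2 p)"
      using lim[OF pl] cf_m[of "kk tau p"] by (simp add: algebra_simps)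
  next
    fix k :: int
    show "continuous_on {p. Im p = (of_int k + 1/2) * Im tau} (\<lambda>p. P1 p + \<i> * P2 p)"
      using cont[of k] by (intro continuous_intros) auto
  qed
  have hG: "G holomorphic_on (UNIV - E)" unfolding G_def E_def
  proof (rule glue_holomorphic[OF tau D, where Q = "\<lambda>p. Q1 p - \<i> * Q2 p"])
    show "(\<lambda>p. h1 p - \<i> * h2 p) holomorphic_on WW tau D" using hol1 hol2 by (intro holomorphic_intros)
    fix p assume pl: "p \<in> cut_lines tau"
    show "((\<lambda>p. h1 p - \<i> * h2 p) \<longlongrightarrow> P1 p - \<i> * P2 p) (at p within {q. Im q > Im p})"
      using lim[OF pl] by (intro tendsto_intros) auto
    show "((\<lambda>p. h1 p - \<i> * h2 p) \<longlongrightarrow> Q1 p - \<i> * Q2 p) (at p within {q. Im q < Im p})"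
      using lim[OF pl] by (intro tendsto_intros) auto
    show "cg (kk tau p) * (P1 p - \<i> * P2 p) = cg (kk tau p - 1) * (Q1 p - \<i> * Q2 p)"
      using lim[OF pl] cg_m[of "kk tau p"] by (simp add: algebra_simps)
  next
    fix k :: int
    show "continuous_on {p. Im p = (of_int k + 1/2) * Im tau} (\<lambda>p. P1 p - \<i> * P2 p)"
      using cont[of k] by (intro continuous_intros) auto
  qed
  have Fw: "F q = cf (kk tau q) * (h1 q + \<i> * h2 q)" if "q \<in> WW tau D" for q
    using WW_sub[OF that] by (simp add: F_def glue_off)
  have Gw: "G q = cg (kk tau q) * (h1 q - \<i> * h2 q)" if "q \<in> WW tau D" for q
    using WW_sub[OF that] by (simp add: G_def glue_off)
  define \<Phi> where "\<Phi> q = F q * F q - G q * G q" for q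
  have hPhi: "\<Phi> holomorphic_on (UNIV - E)" unfolding \<Phi>_def using hF hG by (intro holomorphic_intros)
  have Phiw: "\<Phi> q = (-1) powi (kk tau q) * (4 * \<i> * h1 q * h2 q)" if "q \<in> WW tau D" for q
  proof -
    have "\<Phi> q = (cf (kk tau q) * cf (kk tau q)) * (h1 q + \<i> * h2 q)^2
               - (cg (kk tau q) * cg (kk tau q)) * (h1 q - \<i> * h2 q)^2"
      unfolding \<Phi>_def Fw[OF that] Gw[OF that] by (simp add: power2_eq_square algebra_simps)
    also have "\<dots> = (-1) powi (kk tau q) * ((h1 q + \<i> * h2 q)^2 - (h1 q - \<i> * h2 q)^2)"
      by (simp add: cf_sq cg_sq algebra_simps)
    also have "(h1 q + \<i> * h2 q)^2 - (h1 q - \<i> * h2 q)^2 = 4 * \<i> * h1 q * h2 q"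
      by (simp add: power2_eq_square algebra_simps)
    finally show ?thesis .
  qed
  have WW1: "q + 1 \<in> WW tau D \<longleftrightarrow> q \<in> WW tau D" for q by (rule WW_plus1)
  have WWt: "q + tau \<in> WW tau D \<longleftrightarrow> q \<in> WW tau D" for q by (rule WW_plus_tau)
  have Phi1: "norm (\<Phi> (q + 1)) = norm (\<Phi> q)" if "q \<in> WW tau D" for q
  proof -
    have "\<Phi> (q + 1) = (-1) powi (kk tau q) * (4 * \<i> * (s * h1 q) * (s * h2 q))"
      using Phiw[of "q + 1"] WW1[of q] that per[OF that] by (simp add: kk_plus1)
    also have "\<dots> = (s * s) * ((-1) powi (kk tau q) * (4 * \<i> * h1 q * h2 q))" by (simp add: algebra_simps)
    finally show ?thesis using s Phiw[OF that] by simp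
  qed
  have Phit_eq: "\<Phi> (q + tau) = - \<Phi> q" if "q \<in> WW tau D" for q
    using Phiw[of "q + tau"] WWt[of q] that per[OF that] Phiw[OF that]
    by (simp add: kk_plus_tau[OF tau(2)] m1_p)
  have Phit: "norm (\<Phi> (q + tau)) = norm (\<Phi> q)" if "q \<in> WW tau D" for q
    using Phit_eq[OF that] by simp
  have iterWW: "q + of_int m * 1 + of_int k * tau \<in> WW tau D \<longleftrightarrow> q \<in> WW tau D" for q m k
    using int_iter_set[of 1 "WW tau D" "q + of_int m * 1" k] int_iter_set[of 1 "WW tau D" q m]
          int_iter_set[of tau "WW tau D" "q + of_int m * 1" k] WW1 WWt by blast
  have iterPhi: "norm (\<Phi> (q + of_int m * 1 + of_int k * tau)) = norm (\<Phi> q)" if "q \<in> WW tau D" for q m k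
  proof -
    have a: "q + of_int m * 1 \<in> WW tau D" using int_iter_set[of 1 "WW tau D" q m] WW1 that by blast
    have "norm (\<Phi> (q + of_int m * 1 + of_int k * tau)) = norm (\<Phi> (q + of_int m * 1))"
      by (rule int_iter_norm[of tau "WW tau D" \<Phi>, OF WWt Phit a])
    also have "\<dots> = norm (\<Phi> q)"
      by (rule int_iter_norm[of 1 "WW tau D" \<Phi>, OF WW1 Phi1 that])
    finally show ?thesis .
  qed
  have base0: "\<exists>B. eventually (\<lambda>q. norm (\<Phi> q) \<le> B) (at 0)"
  proof -
    obtain B where B: "eventually (\<lambda>q. norm (h1 q) \<le> B \<and> norm (h2 q) \<le> B) (at 0)" using b0 by blast
    have ev: "eventually (\<lambda>q. q \<in> WW tau D \<and> kk tau q = kk tau 0) (at 0)"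
      by (rule eventually_WW[OF tau D zero_in_pole_set])
    have "eventually (\<lambda>q. norm (\<Phi> q) \<le> 4 * (B * B)) (at 0)"
      using B ev
    proof eventually_elim
      case (elim q)
      hence "\<Phi> q = 4 * \<i> * h1 q * h2 q" using Phiw[of q] kk_0[OF tau(2)] by simp
      hence "norm (\<Phi> q) = 4 * (norm (h1 q) * norm (h2 q))" by (simp add: norm_mult)
      also have "\<dots> \<le> 4 * (B * B)"
      proof -
        have "0 \<le> B" using elim norm_ge_zero[of "h1 q"] by linarith
        thus ?thesis using elim by (intro mult_left_mono mult_mono) auto
      qed
      finally show ?case .
    qed
    thus ?thesis by blast
  qed
  have baseD: "\<exists>B. eventually (\<lambda>q. norm (\<Phi> q) \<le> B) (at (of_real D))"
  proof -
    obtain C where C: "eventually (\<lambda>q. norm ((q - of_real D) * h1 q) \<le> C \<and>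
                 norm (h2 q) \<le> C * norm (q - of_real D)) (at (of_real D))" using bD by blast
    have ev: "eventually (\<lambda>q. q \<in> WW tau D \<and> kk tau q = kk tau (of_real D)) (at (of_real D))"
      by (rule eventually_WW[OF tau D D_in_pole_set])
    have ne: "eventually (\<lambda>q. q \<noteq> of_real D) (at (of_real D))" by (simp add: eventually_at_filter)
    have "eventually (\<lambda>q. norm (\<Phi> q) \<le> 4 * (C * C)) (at (of_real D))"
      using C ev ne
    proof eventually_elim
      case (elim q)
      hence n0: "norm (q - of_real D) > 0" by simp
      have C0: "C \<ge> 0"
        using elim n0 by (smt (verit) norm_ge_zero zero_le_mult_iff)
      have "\<Phi> q = 4 * \<i> * h1 q * h2 q" using Phiw[of q] kk_real[OF tau(2)] elim by simp
      hence "norm (\<Phi> q) * norm (q - of_real D) = 4 * (norm (h1 q) * norm (h2 q)) * norm (q - of_real D)"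
        by (simp add: norm_mult)
      also have "\<dots> = 4 * (norm ((q - of_real D) * h1 q) * norm (h2 q))"
        unfolding norm_mult by (simp add: algebra_simps)
      also have "\<dots> \<le> 4 * (C * (C * norm (q - of_real D)))"
        using elim C0 by (intro mult_left_mono mult_mono) auto
      finally have "norm (\<Phi> q) * norm (q - of_real D) \<le> (4 * (C * C)) * norm (q - of_real D)"
        by (simp add: algebra_simps)
      thus ?case using n0 by simp
    qed
    thus ?thesis by blast
  qed
  have bdE: "\<exists>B. eventually (\<lambda>q. norm (\<Phi> q) \<le> B) (at e)" if e: "e \<in> E" for e
  proof -
    obtain m k :: int and a where a: "a = 0 \<or> a = D" and ed: "e = of_int m + of_int k * tau + of_real a"
      using e unfolding E_def pole_set_iff by blast
    define d where "d = of_int m + of_int k * tau"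
    have "\<exists>B. eventually (\<lambda>q. norm (\<Phi> q) \<le> B) (at (of_real a))" using a base0 baseD by auto
    then obtain B where B: "eventually (\<lambda>q. norm (\<Phi> q) \<le> B) (at (e - d))"
      using ed d_def by auto
    have "eventually (\<lambda>x. norm (\<Phi> (x - d)) \<le> B) (at e)"
      using B unfolding filtermap_at_shift[symmetric] eventually_filtermap .
    moreover have "eventually (\<lambda>q. q \<in> WW tau D \<and> kk tau q = kk tau e) (at e)"
      using eventually_WW[OF tau D] e E_def by blast
    ultimately have "eventually (\<lambda>x. norm (\<Phi> x) \<le> B) (at e)"
    proof eventually_elim
      case (elim x)
      have x': "(x - d) + of_int m * 1 + of_int k * tau = x" by (simp add: d_def)
      have "x - d \<in> WW tau D" using iterWW[of "x - d" m k] elim unfolding x' by blast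
      hence "norm (\<Phi> x) = norm (\<Phi> (x - d))" using iterPhi[of "x - d" m k] unfolding x' by simp
      thus ?case using elim by simp
    qed
    thus ?thesis by blast
  qed
  obtain \<Psi> where hPsi: "\<Psi> holomorphic_on UNIV" and PsiPhi: "\<And>z. z \<notin> E \<Longrightarrow> \<Psi> z = \<Phi> z"
    using remove_sing[OF hPhi _ _ bdE] pole_set_closed[OF tau D] pole_set_no_limpt[OF tau D]
    unfolding E_def by blast
  have WWE: "q \<in> WW tau D \<Longrightarrow> q \<notin> E" for q using WW_sub E_def by blast
  have oWW: "open (WW tau D)" by (rule open_WW[OF tau D])
  have neWW: "WW tau D \<noteq> {}" using WW_nonempty[OF tau] by blast
  have shift_hol: "(\<lambda>q. \<Psi> (q + c)) holomorphic_on UNIV" for c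
  proof -
    have "(\<Psi> \<circ> (\<lambda>q. q + c)) holomorphic_on UNIV"
      by (rule holomorphic_on_compose) (auto intro!: holomorphic_intros holomorphic_on_subset[OF hPsi])
    thus ?thesis by (simp add: o_def)
  qed
  have Psi1: "\<Psi> (q + 1) = \<Psi> q" for q
  proof (rule analytic_continuation_open[OF oWW open_UNIV neWW connected_UNIV subset_UNIV shift_hol hPsi])
    fix z assume z: "z \<in> WW tau D"
    have "norm (\<Phi> (z + 1)) = norm (\<Phi> z)" using Phi1[OF z] .
    have "\<Phi> (z + 1) = \<Phi> z"
      using Phiw[of "z + 1"] Phiw[OF z] WW1[of z] z per[OF z] s kk_plus1[of tau z]
      by (simp add: algebra_simps)
    thus "\<Psi> (z + 1) = \<Psi> z" using PsiPhi WWE z WW1 by metis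
  qed auto
  have Psit: "\<Psi> (q + tau) = - \<Psi> q" for q
  proof -
    have "(\<lambda>q. \<Psi> (q + tau)) q = (\<lambda>q. - \<Psi> q) q"
    proof (rule analytic_continuation_open[OF oWW open_UNIV neWW connected_UNIV subset_UNIV shift_hol])
      show "(\<lambda>q. - \<Psi> q) holomorphic_on UNIV" using hPsi by (intro holomorphic_intros)
      fix z assume z: "z \<in> WW tau D"
      show "\<Psi> (z + tau) = - \<Psi> z" using PsiPhi WWE z WWt Phit_eq[OF z] by metis
    qed auto
    thus ?thesis by simp
  qed
  have Psi0: "\<Psi> q = 0" for q by (rule periodic_zero[OF tau hPsi Psi1 Psit])
  define A where "A = UNIV - E"
  have oA: "open A" using pole_set_closed[OF tau D] by (auto simp: A_def E_def)
  have cA: "connected A" unfolding A_def E_def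
    by (rule connected_open_diff_countable) (auto simp: pole_set_countable)
  have FG: "F z * F z = G z * G z" if "z \<in> A" for z
    using PsiPhi[of z] Psi0[of z] that by (simp add: A_def \<Phi>_def)
  have WWA: "WW tau D \<subseteq> A" using WWE by (auto simp: A_def)
  have alt: "(\<forall>z\<in>A. F z = - G z) \<or> (\<forall>z\<in>A. F z = G z)"
  proof (rule disjCI)
    assume "\<not> (\<forall>z\<in>A. F z = G z)"
    then obtain w where w: "w \<in> A" "F w \<noteq> G w" by blast
    have "continuous_on A (\<lambda>z. F z - G z)" using hF hG
      by (intro holomorphic_on_imp_continuous_on holomorphic_intros) (auto simp: A_def)
    hence "isCont (\<lambda>z. F z - G z) w" using oA w continuous_on_eq_continuous_at by blast
    then obtain e where e: "e > 0" "\<And>y. dist w y < e \<Longrightarrow> F y - G y \<noteq> 0"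
      using continuous_at_avoid[of w "\<lambda>z. F z - G z" 0] w by auto
    obtain r where r: "r > 0" "ball w r \<subseteq> A" using oA w open_contains_ball by blast
    define N where "N = ball w (min e r)"
    have NA: "N \<subseteq> A" using r by (auto simp: N_def)
    have "F z + G z = 0" if "z \<in> N" for z
    proof -
      have "F z - G z \<noteq> 0" using e that by (auto simp: N_def)
      moreover have "(F z - G z) * (F z + G z) = 0"
      proof -
        have "z \<in> A" using NA that by blast
        hence "F z * F z = G z * G z" by (rule FG)
        thus ?thesis by (simp add: algebra_simps)
      qed
      ultimately show ?thesis by simp
    qed
    have "F z + G z = 0" if "z \<in> A" for z
    proof -
      show "F z + G z = 0"
      proof (rule analytic_continuation_open[where s=N and s'=A and f="\<lambda>z. F z + G z" and g="\<lambda>z. 0"])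
        show "open N" "N \<noteq> {}" "N \<subseteq> A" "open A" "connected A"
          using e r NA oA cA by (auto simp: N_def)
        show "(\<lambda>z. F z + G z) holomorphic_on A" using hF hG by (intro holomorphic_intros) (auto simp: A_def)
      qed (use \<open>\<And>z. z \<in> N \<Longrightarrow> F z + G z = 0\<close> that in auto)
    qed
    thus "\<forall>z\<in>A. F z = - G z" by (simp add: add_eq_0_iff)
  qed
  have pt: "p + tau \<in> WW tau D" using WWt p by blast
  have Ft: "F (p + tau) = - \<i> * F p"
    using Fw[OF pt] Fw[OF p] per[OF p] cf_p by (simp add: kk_plus_tau[OF tau(2)])
  have Gt: "G (p + tau) = \<i> * G p"
    using Gw[OF pt] Gw[OF p] per[OF p] cg_p by (simp add: kk_plus_tau[OF tau(2)])
  have pA: "p \<in> A" "p + tau \<in> A" using WWA p pt by auto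
  have "F p = 0 \<and> G p = 0"
    using alt
  proof
    assume h: "\<forall>z\<in>A. F z = - G z"
    hence "- \<i> * F p = \<i> * F p" using Ft Gt pA by (metis minus_mult_right)
    hence "F p = 0" by simp
    thus ?thesis using h pA by simp
  next
    assume h: "\<forall>z\<in>A. F z = G z"
    hence "- \<i> * F p = \<i> * F p" using Ft Gt pA by metis
    hence "F p = 0" by simp
    thus ?thesis using h pA by simp
  qed
  hence "h1 p + \<i> * h2 p = 0" "h1 p - \<i> * h2 p = 0"
    using Fw[OF p] Gw[OF p] cf_nz by (auto simp: cg_def)
  hence e1: "h1 p = - (\<i> * h2 p)" and e2: "h1 p = \<i> * h2 p" by (simp_all add: eq_neg_iff_add_eq_0)
  hence "h2 p = 0" by simp
  thus ?thesis using e2 by simp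
qed



lemma jumpE: fixes A B :: cmat assumes "A = B ** jump_J" shows "A $ r $ 1 = - B $ r $ 2 \<and> A $ r $ 2 = B $ r $ 1"
  using assms by (simp add: matrix_matrix_mult_def sum_2 jump_J_def)

lemma ii_mult: "\<i> * x * \<i> = - (x::complex)" by (metis complex_i_mult_minus mult.commute)

lemma sig_entry: fixes X :: cmat
  shows "(i_sigma3 ** X ** i_minus_sigma3) $ i $ j = (if i = j then 1 else -1) * X $ i $ j"
  using exhaust_2[of i] exhaust_2[of j]
  by (auto simp: matrix_matrix_mult_def sum_2 i_sigma3_def i_minus_sigma3_def ii_mult)

lemma dist_cnj_shift: "dist (cnj x + c) (cnj p + c) = dist x p"
proof -
  have "cnj x + c - (cnj p + c) = cnj (x - p)" by simp
  thus ?thesis by (simp only: dist_norm complex_mod_cnj)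
qed

lemma dist_cnj: "dist (cnj x) (cnj p) = dist x p"
  using dist_cnj_shift[of x 0 p] by simp

lemma lim_cnj_shift:
  fixes f :: "complex \<Rightarrow> complex"
  assumes lim: "(f \<longlongrightarrow> l) (at (cnj p + c) within S')" and S: "\<And>q. q \<in> S \<Longrightarrow> cnj q + c \<in> S'"
  shows "((\<lambda>q. cnj (f (cnj q + c))) \<longlongrightarrow> cnj l) (at p within S)"
  unfolding Lim_within
proof (intro allI impI)
  fix e :: real assume e: "e > 0"
  have "\<exists>d>0. \<forall>x\<in>S'. 0 < dist x (cnj p + c) \<and> dist x (cnj p + c) < d \<longrightarrow> dist (f x) l < e"
    using lim e unfolding Lim_within by blast
  then obtain d where d1: "d > 0" and d: "\<forall>x\<in>S'. 0 < dist x (cnj p + c) \<and> dist x (cnj p + c) < d \<longrightarrow> dist (f x) l < e"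
    by blast
  have "\<forall>x\<in>S. 0 < dist x p \<and> dist x p < d \<longrightarrow> dist (cnj (f (cnj x + c))) (cnj l) < e"
  proof (intro ballI impI)
    fix x assume x: "x \<in> S" "0 < dist x p \<and> dist x p < d"
    have "cnj x + c \<in> S'" using S x(1) .
    moreover have "0 < dist (cnj x + c) (cnj p + c) \<and> dist (cnj x + c) (cnj p + c) < d"
      using x(2) by (simp only: dist_cnj_shift)
    ultimately have "dist (f (cnj x + c)) l < e" using d by blast
    thus "dist (cnj (f (cnj x + c))) (cnj l) < e" by (simp only: dist_cnj)
  qed
  thus "\<exists>d>0. \<forall>x\<in>S. 0 < dist x p \<and> dist x p < d \<longrightarrow> dist (cnj (f (cnj x + c))) (cnj l) < e"
    using d1 by blast
qed

lemma lim_cnj: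
  fixes f :: "complex \<Rightarrow> complex"
  assumes lim: "(f \<longlongrightarrow> l) (at (cnj p) within S')" and S: "\<And>q. q \<in> S \<Longrightarrow> cnj q \<in> S'"
  shows "((\<lambda>q. cnj (f (cnj q))) \<longlongrightarrow> cnj l) (at p within S)"
  using lim_cnj_shift[of f l p 0 S' S] assms by simp

lemma ev_cnj:
  assumes "eventually P (at (cnj a))" shows "eventually (\<lambda>q. P (cnj q)) (at a)"
proof -
  obtain d where d: "d > 0" "\<And>x. x \<noteq> cnj a \<Longrightarrow> dist x (cnj a) < d \<Longrightarrow> P x"
    using assms unfolding eventually_at by auto
  have "dist (cnj x) (cnj a) = dist x a" for x
    by (metis complex_cnj_diff complex_mod_cnj dist_norm)
  hence "\<forall>x. x \<noteq> a \<and> dist x a < d \<longrightarrow> P (cnj x)" using d by (metis complex_cnj_cnj)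
  thus ?thesis unfolding eventually_at using d(1) by blast
qed

lemma bound_entry:
  fixes a b d d' e :: complex
  assumes "norm (a - d) \<le> C" "norm (b - d') \<le> C" "d + e * cnj d' = 0" "norm e = 1"
  shows "norm (a + e * cnj b) \<le> 2 * C"
proof -
  have "a + e * cnj b = (a - d) + e * cnj (b - d') + (d + e * cnj d')" by (simp add: algebra_simps)
  also have "\<dots> = (a - d) + e * cnj (b - d')" using assms(3) by simp
  finally have "norm (a + e * cnj b) \<le> norm (a - d) + norm (e * cnj (b - d'))" by (metis norm_triangle_ineq)
  also have "norm (e * cnj (b - d')) = norm (b - d')" using assms(4) by (simp only: norm_mult complex_mod_cnj mult_1)
  finally show ?thesis using assms(1,2) by simp
qed

lemma row_hom:
  fixes M :: "complex \<Rightarrow> cmat" and r :: 2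
  assumes tau: "Re tau = 0" "Im tau > 0" and D: "0 < D" "D < 1"
    and ms: "model_solution n tau D M"
    and p: "p \<in> WW tau D"
  defines "e \<equiv> \<lambda>j::2. if r = j then (-1::complex) else 1"
  shows "M p $ r $ 1 + e 1 * cnj (M (cnj p) $ r $ 1) = 0 \<and> M p $ r $ 2 + e 2 * cnj (M (cnj p) $ r $ 2) = 0"
proof -
  define sr :: real where "sr = (-1) ^ (n - 1)"
  define BP where "BP = bv_plus M"
  define BM where "BM = bv_minus M"
  have hol: "\<And>i j. (\<lambda>p. M p $ i $ j) holomorphic_on WW tau D"
    using ms unfolding model_solution_def WW_def sr_def BP_def BM_def by blast
  have per: "\<And>p. p \<in> mp_domain tau \<Longrightarrow> M (p + 1) = sr *\<^sub>R M p \<and> M (p + tau) = M p"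
    using ms unfolding model_solution_def WW_def sr_def BP_def BM_def by blast
  have at0: "\<exists>C. \<forall>\<^sub>F p in at 0. norm ((\<chi> i j. M p $ i $ j - (if i = j then 1 / p else 0)) :: cmat) \<le> C"
    using ms unfolding model_solution_def WW_def sr_def BP_def BM_def by blast
  have atD: "\<exists>C. \<forall>\<^sub>F p in at (of_real D). \<forall>i.
         norm ((p - of_real D) * M p $ i $ 1) \<le> C \<and> norm (M p $ i $ 2) \<le> C * norm (p - of_real D)"
    using ms unfolding model_solution_def WW_def sr_def BP_def BM_def by blast
  have bv: "\<And>p. p \<in> cut_lines tau \<Longrightarrow> (M \<longlongrightarrow> BP p) (at p within {q. Im q > Im p}) \<and>
         (M \<longlongrightarrow> BM p) (at p within {q. Im q < Im p}) \<and> BP p = BM p ** jump_J"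
    using ms unfolding model_solution_def WW_def sr_def BP_def BM_def by blast
  have contB: "\<And>k::int. continuous_on {p. Im p = (of_int k + 1/2) * Im tau} BP \<and>
               continuous_on {p. Im p = (of_int k + 1/2) * Im tau} BM"
    using ms unfolding model_solution_def WW_def sr_def BP_def BM_def by blast
  have e_norm: "norm (e j) = 1" for j by (simp add: e_def)
  have e12: "e 1 = - e 2" using exhaust_2[of r] by (auto simp: e_def)
  define h where "h j q = M q $ r $ j + e j * cnj (M (cnj q) $ r $ j)" for j q
  define P where "P j q = BP q $ r $ j + e j * cnj (BM (cnj q) $ r $ j)" for j q
  define Q where "Q j q = BM q $ r $ j + e j * cnj (BP (cnj q) $ r $ j)" for j q
  have cWW: "cnj q \<in> WW tau D" if "q \<in> WW tau D" for q using that WW_cnj[OF tau(1)] by blast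
  have hol_h: "h j holomorphic_on WW tau D" for j
  proof -
    have "(\<lambda>q. M q $ r $ j) holomorphic_on cnj ` WW tau D"
      by (rule holomorphic_on_subset[OF hol]) (use cWW in auto)
    hence "(cnj \<circ> (\<lambda>q. M q $ r $ j) \<circ> cnj) holomorphic_on WW tau D"
      by (rule holomorphic_on_compose_cnj_cnj) (rule open_WW[OF tau D])
    hence "(\<lambda>q. cnj (M (cnj q) $ r $ j)) holomorphic_on WW tau D" by (simp add: o_def)
    thus ?thesis unfolding h_def using hol by (intro holomorphic_intros) auto
  qed
  have ss: "of_real sr * of_real sr = (1::complex)"
    by (simp add: sr_def flip: of_real_mult power_mult_distrib)
  have per_h: "h j (q + 1) = of_real sr * h j q \<and> h j (q + tau) = h j q" if q: "q \<in> WW tau D" for j q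
  proof -
    have qd: "q \<in> mp_domain tau" using q by (simp add: WW_def)
    have cqd: "cnj q \<in> mp_domain tau" using cWW[OF q] by (simp add: WW_def)
    have cqd': "cnj q - tau \<in> mp_domain tau"
      using cqd lines_plus_tau[of "cnj q - tau" tau] by (simp add: mp_domain_def)
    have a: "M (q + 1) $ r $ j = of_real sr * M q $ r $ j"
    proof -
      have "M (q + 1) $ r $ j = sr *\<^sub>R (M q $ r $ j)" using per[OF qd] by simp
      thus ?thesis by (simp add: scaleR_conv_of_real)
    qed
    have b: "M (cnj q + 1) $ r $ j = of_real sr * M (cnj q) $ r $ j"
    proof -
      have "M (cnj q + 1) $ r $ j = sr *\<^sub>R (M (cnj q) $ r $ j)" using per[OF cqd] by simp
      thus ?thesis by (simp add: scaleR_conv_of_real)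
    qed
    have c: "M (q + tau) = M q" using per[OF qd] by simp
    have d: "M (cnj q - tau) = M (cnj q)" using per[OF cqd'] by simp
    have ct: "cnj tau = - tau" using cnj_tau[OF tau(1)] .
    show ?thesis using a b c d by (simp add: h_def algebra_simps ct)
  qed
  have b0: "\<exists>B. eventually (\<lambda>q. norm (h 1 q) \<le> B \<and> norm (h 2 q) \<le> B) (at 0)"
  proof -
    obtain C where C: "\<forall>\<^sub>F q in at 0. norm ((\<chi> i j. M q $ i $ j - (if i = j then 1 / q else 0)) :: cmat) \<le> C"
      using at0 by blast
    have C': "\<forall>\<^sub>F q in at 0. \<forall>j. norm (M q $ r $ j - (if r = j then 1 / q else 0)) \<le> C"
      using C
    proof eventually_elim
      case (elim q)
      show ?case
      proof
        fix j
        have "norm (M q $ r $ j - (if r = j then 1 / q else 0))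
              = norm (((\<chi> i j. M q $ i $ j - (if i = j then 1 / q else 0)) :: cmat) $ r $ j)" by simp
        also have "\<dots> \<le> norm (((\<chi> i j. M q $ i $ j - (if i = j then 1 / q else 0)) :: cmat) $ r)"
          by (rule Finite_Cartesian_Product.norm_nth_le)
        also have "\<dots> \<le> norm ((\<chi> i j. M q $ i $ j - (if i = j then 1 / q else 0)) :: cmat)"
          by (rule Finite_Cartesian_Product.norm_nth_le)
        finally show "norm (M q $ r $ j - (if r = j then 1 / q else 0)) \<le> C" using elim by linarith
      qed
    qed
    have C'': "\<forall>\<^sub>F q in at 0. \<forall>j. norm (M (cnj q) $ r $ j - (if r = j then 1 / cnj q else 0)) \<le> C"
      by (rule ev_cnj[where P = "\<lambda>q. \<forall>j. norm (M q $ r $ j - (if r = j then 1 / q else 0)) \<le> C"])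
         (simp only: complex_cnj_zero C')
    have "\<forall>\<^sub>F q in at 0. norm (h 1 q) \<le> 2 * C \<and> norm (h 2 q) \<le> 2 * C"
      using C' C''
    proof eventually_elim
      case (elim q)
      have "norm (h j q) \<le> 2 * C" for j
        unfolding h_def
        by (rule bound_entry[where d = "if r = j then 1 / q else 0" and d' = "if r = j then 1 / cnj q else 0"])
           (use elim e_norm in \<open>auto simp: e_def\<close>)
      thus ?case by simp
    qed
    thus ?thesis by blast
  qed
  have bD: "\<exists>C. eventually (\<lambda>q. norm ((q - of_real D) * h 1 q) \<le> C \<and>
                 norm (h 2 q) \<le> C * norm (q - of_real D)) (at (of_real D))"
  proof -
    obtain C where C: "\<forall>\<^sub>F q in at (of_real D). \<forall>i.
         norm ((q - of_real D) * M q $ i $ 1) \<le> C \<and> norm (M q $ i $ 2) \<le> C * norm (q - of_real D)"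
      using atD by blast
    have C': "\<forall>\<^sub>F q in at (of_real D). \<forall>i.
         norm ((cnj q - of_real D) * M (cnj q) $ i $ 1) \<le> C \<and> norm (M (cnj q) $ i $ 2) \<le> C * norm (cnj q - of_real D)"
      by (rule ev_cnj[where P = "\<lambda>q. \<forall>i.
         norm ((q - of_real D) * M q $ i $ 1) \<le> C \<and> norm (M q $ i $ 2) \<le> C * norm (q - of_real D)"])
         (simp only: complex_cnj_complex_of_real C)
    have "\<forall>\<^sub>F q in at (of_real D). norm ((q - of_real D) * h 1 q) \<le> 2 * C \<and>
                 norm (h 2 q) \<le> (2 * C) * norm (q - of_real D)"
      using C C'
    proof eventually_elim
      case (elim q)
      have n1: "norm (cnj q - of_real D) = norm (q - of_real D)"
        by (metis complex_cnj_complex_of_real complex_cnj_diff complex_mod_cnj)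
      have "(q - of_real D) * h 1 q = (q - of_real D) * M q $ r $ 1 +
              e 1 * cnj ((cnj q - of_real D) * M (cnj q) $ r $ 1)"
        by (simp add: h_def algebra_simps)
      hence "norm ((q - of_real D) * h 1 q) \<le> norm ((q - of_real D) * M q $ r $ 1) +
              norm ((cnj q - of_real D) * M (cnj q) $ r $ 1)"
        by (metis norm_triangle_ineq e_norm norm_mult complex_mod_cnj mult_1)
      moreover have "norm ((q - of_real D) * M q $ r $ 1) \<le> C" using elim by blast
      moreover have "norm ((cnj q - of_real D) * M (cnj q) $ r $ 1) \<le> C" using elim by blast
      ultimately have A: "norm ((q - of_real D) * h 1 q) \<le> 2 * C" by linarith
      have "norm (h 2 q) \<le> norm (M q $ r $ 2) + norm (M (cnj q) $ r $ 2)"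
        unfolding h_def by (metis norm_triangle_ineq e_norm norm_mult complex_mod_cnj mult_1)
      moreover have "norm (M q $ r $ 2) \<le> C * norm (q - of_real D)" using elim by blast
      moreover have "norm (M (cnj q) $ r $ 2) \<le> C * norm (q - of_real D)" using elim n1 by metis
      ultimately have B: "norm (h 2 q) \<le> (2 * C) * norm (q - of_real D)" by linarith
      show ?case using A B by simp
    qed
    thus ?thesis by blast
  qed
  have lim: "(h 1 \<longlongrightarrow> P 1 q) (at q within {x. Im x > Im q}) \<and> (h 2 \<longlongrightarrow> P 2 q) (at q within {x. Im x > Im q}) \<and>
       (h 1 \<longlongrightarrow> Q 1 q) (at q within {x. Im x < Im q}) \<and> (h 2 \<longlongrightarrow> Q 2 q) (at q within {x. Im x < Im q}) \<and>
       P 1 q = - Q 2 q \<and> P 2 q = Q 1 q" if q: "q \<in> cut_lines tau" for q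
  proof -
    have cq: "cnj q \<in> cut_lines tau" using q lines_cnj by blast
    note bq = bv[OF q] and bcq = bv[OF cq]
    have up: "(h j \<longlongrightarrow> P j q) (at q within {x. Im x > Im q})" for j
    proof -
      have "((\<lambda>x. M x $ r $ j) \<longlongrightarrow> BP q $ r $ j) (at q within {x. Im x > Im q})"
        using bq by (intro tendsto_vec_nth) auto
      moreover have "((\<lambda>x. cnj (M (cnj x) $ r $ j)) \<longlongrightarrow> cnj (BM (cnj q) $ r $ j)) (at q within {x. Im x > Im q})"
        by (rule lim_cnj[where S' = "{x. Im x < Im (cnj q)}"]) (use bcq in \<open>auto intro!: tendsto_vec_nth\<close>)
      ultimately show ?thesis unfolding h_def P_def by (rule tendsto_add[OF _ tendsto_mult_left])
    qed
    have low: "(h j \<longlongrightarrow> Q j q) (at q within {x. Im x < Im q})" for j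
    proof -
      have "((\<lambda>x. M x $ r $ j) \<longlongrightarrow> BM q $ r $ j) (at q within {x. Im x < Im q})"
        using bq by (intro tendsto_vec_nth) auto
      moreover have "((\<lambda>x. cnj (M (cnj x) $ r $ j)) \<longlongrightarrow> cnj (BP (cnj q) $ r $ j)) (at q within {x. Im x < Im q})"
        by (rule lim_cnj[where S' = "{x. Im x > Im (cnj q)}"]) (use bcq in \<open>auto intro!: tendsto_vec_nth\<close>)
      ultimately show ?thesis unfolding h_def Q_def by (rule tendsto_add[OF _ tendsto_mult_left])
    qed
    have j1: "BP q $ r $ 1 = - BM q $ r $ 2 \<and> BP q $ r $ 2 = BM q $ r $ 1" using bq jumpE by blast
    have j2: "BP (cnj q) $ r $ 1 = - BM (cnj q) $ r $ 2 \<and> BP (cnj q) $ r $ 2 = BM (cnj q) $ r $ 1"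
      using bcq jumpE by blast
    have "P 1 q = - Q 2 q" "P 2 q = Q 1 q"
      unfolding P_def Q_def using j1 j2 e12 by (simp_all add: algebra_simps)
    thus ?thesis using up low by blast
  qed
  have cont: "continuous_on {x. Im x = (of_int k + 1/2) * Im tau} (P j)" for k j
  proof -
    let ?L = "{x. Im x = (of_int k + 1/2) * Im tau}"
    let ?L' = "{x. Im x = (of_int (- k - 1) + 1/2) * Im tau}"
    have c1: "continuous_on ?L (\<lambda>x. BP x $ r $ j)"
      using contB[of k] by (intro continuous_on_component) auto
    have c2: "continuous_on ?L' (\<lambda>x. BM x $ r $ j)"
      using contB[of "- k - 1"] by (intro continuous_on_component) auto
    have "cnj ` ?L \<subseteq> ?L'" by (auto simp: algebra_simps)
    hence "continuous_on ?L (\<lambda>x. BM (cnj x) $ r $ j)"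
      by (intro continuous_on_compose2[OF c2]) (auto intro: continuous_intros)
    hence "continuous_on ?L (\<lambda>x. cnj (BM (cnj x) $ r $ j))" by (rule continuous_on_cnj)
    thus ?thesis unfolding P_def by (rule continuous_on_add[OF c1 continuous_on_mult_left])
  qed
  have per2: "\<And>q. q \<in> WW tau D \<Longrightarrow> h 1 (q + 1) = of_real sr * h 1 q \<and> h 2 (q + 1) = of_real sr * h 2 q \<and>
                 h 1 (q + tau) = h 1 q \<and> h 2 (q + tau) = h 2 q" using per_h by blast
  have cont2: "\<And>k::int. continuous_on {x. Im x = (of_int k + 1/2) * Im tau} (P 1) \<and>
                        continuous_on {x. Im x = (of_int k + 1/2) * Im tau} (P 2)" using cont by blast
  have "h 1 p = 0 \<and> h 2 p = 0"
    using hom_zero[where ?h1.0 = "h 1" and ?h2.0 = "h 2" and ?P1.0 = "P 1" and ?P2.0 = "P 2" and ?Q1.0 = "Q 1" and ?Q2.0 = "Q 2"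
        and s = "of_real sr", OF tau D ss hol_h[of 1] hol_h[of 2] per2 b0 bD lim cont2 p] .
  thus ?thesis by (simp add: h_def)
qed


lemma entry_sym:
  fixes M :: "complex \<Rightarrow> cmat"
  assumes tau: "Re tau = 0" "Im tau > 0" and D: "0 < D" "D < 1"
    and ms: "model_solution n tau D M" and p: "p \<in> WW tau D"
  shows "cnj (M (cnj p) $ i $ j) = (if i = j then 1 else -1) * M p $ i $ j"
proof -
  note R = row_hom[OF tau D ms p, of i]
  have H: "M p $ i $ j + (if i = j then -1 else 1) * cnj (M (cnj p) $ i $ j) = 0"
  proof -
    consider "j = 1" | "j = 2" using exhaust_2[of j] by blast
    thus ?thesis
    proof cases
      case 1 thus ?thesis using R by simp
    next
      case 2 thus ?thesis using R by simp
    qed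
  qed
  show ?thesis
  proof (cases "i = j")
    case True thus ?thesis using H by simp
  next
    case False thus ?thesis using H by (simp add: add_eq_0_iff)
  qed
qed

lemma islimpt_below: "p islimpt {q. Im q < Im p}"
  unfolding islimpt_approachable
proof (intro allI impI)
  fix e :: real assume e: "e > 0"
  let ?x = "p - \<i> * of_real (e / 2)"
  have "?x \<in> {q. Im q < Im p}" "?x \<noteq> p" "dist ?x p < e" using e by (auto simp: dist_norm norm_mult)
  thus "\<exists>x'\<in>{q. Im q < Im p}. x' \<noteq> p \<and> dist x' p < e" by blast
qed

theorem corollary3p11:
  fixes n :: nat and tau :: complex and D :: real and M :: "complex \<Rightarrow> complex^2^2"
  assumes "n \<ge> 1"
    and "Re tau = 0" and "Im tau > 0"
    and "0 < D" and "D < 1"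
    and "model_solution n tau D M"
  shows "(\<forall>p \<in> mp_domain tau - pole_set tau D.
            (\<chi> i j. cnj (M (cnj p) $ i $ j)) = i_sigma3 ** M p ** i_minus_sigma3)
       \<and> (\<forall>p \<in> mp_domain tau - pole_set tau D. cnj (M (cnj p) $ 1 $ 1) = M p $ 1 $ 1)
       \<and> (\<forall>p. Im p = Im tau / 2 \<longrightarrow>
            bv_plus M p $ 1 $ 2 = bv_minus M p $ 1 $ 1 \<and>
            bv_minus M p $ 1 $ 1 = cnj (bv_plus M p $ 1 $ 1))"
proof -
  have tau: "Re tau = 0" "Im tau > 0" and D: "0 < D" "D < 1" and ms: "model_solution n tau D M"
    using assms by auto
  note ent = entry_sym[OF tau D ms]
  have part1: "\<forall>p \<in> mp_domain tau - pole_set tau D.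
            (\<chi> i j. cnj (M (cnj p) $ i $ j)) = i_sigma3 ** M p ** i_minus_sigma3"
  proof
    fix p assume "p \<in> mp_domain tau - pole_set tau D"
    hence p: "p \<in> WW tau D" by (simp add: WW_def)
    show "(\<chi> i j. cnj (M (cnj p) $ i $ j)) = i_sigma3 ** M p ** i_minus_sigma3"
      by (simp add: vec_eq_iff sig_entry ent[OF p])
  qed
  have part2: "\<forall>p \<in> mp_domain tau - pole_set tau D. cnj (M (cnj p) $ 1 $ 1) = M p $ 1 $ 1"
    using ent by (simp add: WW_def)
  have part3: "bv_plus M p $ 1 $ 2 = bv_minus M p $ 1 $ 1 \<and>
            bv_minus M p $ 1 $ 1 = cnj (bv_plus M p $ 1 $ 1)" if pi: "Im p = Im tau / 2" for p
  proof -
    have per: "\<And>p. p \<in> mp_domain tau \<Longrightarrow> M (p + tau) = M p"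
      using ms unfolding model_solution_def by blast
    have bv: "\<And>p. p \<in> cut_lines tau \<Longrightarrow> (M \<longlongrightarrow> bv_plus M p) (at p within {q. Im q > Im p}) \<and>
         (M \<longlongrightarrow> bv_minus M p) (at p within {q. Im q < Im p}) \<and> bv_plus M p = bv_minus M p ** jump_J"
      using ms unfolding model_solution_def by blast
    have pk: "Im p = (of_int 0 + 1/2) * Im tau" using pi by simp
    have pl: "p \<in> cut_lines tau" using pk unfolding cut_lines_iff by blast
    note bp = bv[OF pl]
    have A: "bv_plus M p $ 1 $ 2 = bv_minus M p $ 1 $ 1" using bp jumpE by blast
    define f where "f q = M q $ 1 $ 1" for q
    have cp: "cnj p + tau = p" using tau pi by (simp add: complex_eq_iff)
    have l1: "(f \<longlongrightarrow> bv_minus M p $ 1 $ 1) (at p within {q. Im q < Im p})"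
      unfolding f_def using bp by (intro tendsto_vec_nth) auto
    have fup: "(f \<longlongrightarrow> bv_plus M p $ 1 $ 1) (at (cnj p + tau) within {q. Im q > Im p})"
      unfolding f_def cp using bp by (intro tendsto_vec_nth) auto
    have l2: "((\<lambda>q. cnj (f (cnj q + tau))) \<longlongrightarrow> cnj (bv_plus M p $ 1 $ 1)) (at p within {q. Im q < Im p})"
      by (rule lim_cnj_shift[OF fup]) (use pi in auto)
    have ev: "eventually (\<lambda>q. cnj (f (cnj q + tau)) = f q) (at p within {q. Im q < Im p})"
    proof -
      have "cnj (f (cnj q + tau)) = f q" if q: "dist q p < Im tau / 2" "Im q < Im p" for q
      proof -
        have qb: "q \<in> ball p (Im tau / 2)" using q by (simp add: dist_commute)
        have "q \<notin> pole_set tau D" "q \<notin> cut_lines tau"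
          using line_ball(1)[OF tau pk qb] line_ball(2)[OF tau pk qb] q(2) by auto
        hence qW: "q \<in> WW tau D" by (simp add: WW_def mp_domain_def)
        have "cnj q \<in> mp_domain tau" using qW lines_cnj by (simp add: WW_def mp_domain_def)
        hence "f (cnj q + tau) = f (cnj q)" by (simp add: f_def per)
        moreover have "cnj (f (cnj q)) = f q" using ent[OF qW, of 1 1] by (simp add: f_def)
        ultimately show ?thesis by simp
      qed
      moreover have "Im tau / 2 > 0" using tau by simp
      ultimately show ?thesis unfolding eventually_at by blast
    qed
    have l3: "(f \<longlongrightarrow> cnj (bv_plus M p $ 1 $ 1)) (at p within {q. Im q < Im p})"
      using l2 ev by (simp add: tendsto_cong)
    have "\<not> trivial_limit (at p within {q. Im q < Im p})"
      using islimpt_below[of p] by (simp add: trivial_limit_within)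
    hence "bv_minus M p $ 1 $ 1 = cnj (bv_plus M p $ 1 $ 1)" using tendsto_unique l1 l3 by blast
    thus ?thesis using A by simp
  qed
  show ?thesis using part1 part2 part3 by blast
qed

end
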